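(* Let $\tilde{\mathcal L}^{\tau,\sigma_1}$ be the real Lie algebra of formal Laurent series $\xi(\lambda)=\sum_{j\le n_0}\xi_j\lambda^j$ (for some integer $n_0$ depending on $\xi$) such that $\xi_j\in\mathfrak k_1$ for $j$ even and $\xi_j\in\mathfrak p_1$ for $j$ odd, with bracket $[\sum_i\xi_i\lambda^i,\sum_j\eta_j\lambda^j]=\sum_k\big(\sum_{i+j=k}[\xi_i,\eta_j]\big)\lambda^k$. Define $$\tilde{\mathcal L}^{\tau,\sigma_1}_+=\Big\{\xi\in\tilde{\mathcal L}^{\tau,\sigma_1}:\ \xi_{-j}=\sigma_2(\xi_j)\ \text{for all } j,\ \ \xi(1):=\textstyle\sum_j\xi_j\in\mathfrak k_2'\Big\},$$ $$\tilde{\mathcal L}^{\tau,\sigma_1}_-=\Big\{\xi\in\tilde{\mathcal L}^{\tau,\sigma_1}:\ \xi_j=0\ \text{for } j>0,\ \xi_0\in\mathfrak k_1'\Big\}.$$ (Elements of $\tilde{\mathcal L}^{\tau,\sigma_1}_+$ are Laurent polynomials, so $\xi(1)$ is a finite sum.) Then $\tilde{\mathcal L}^{\tau,\sigma_1}_+$ and $\tilde{\mathcal L}^{\tau,\sigma_1}_-$ are Lie subalgebras of $\tilde{\mathcal L}^{\tau,\sigma_1}$ and $\tilde{\mathcal L}^{\tau,\sigma_1}=\tilde{\mathcal L}^{\tau,\sigma_1}_+\oplus\tilde{\mathcal L}^{\tau,\sigma_1}_-$ as a direct sum of vector spaces; i.e., every $A\in\tilde{\mathcal L}^{\tau,\sigma_1}$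 can be written uniquely as $A=\xi+\eta$ with $\xi\in\tilde{\mathcal L}^{\tau,\sigma_1}_+$, $\eta\in\tilde{\mathcal L}^{\tau,\sigma_1}_-$.
   Context: Let $\mathfrak g$ be a complex simple Lie algebra, $\tau$ a conjugate-linear involution of $\mathfrak g$, and $\sigma_1,\sigma_2$ complex-linear involutions of $\mathfrak g$, the three involutions pairwise commuting. Let $\mathfrak u=\{x\in\mathfrak g:\tau(x)=x\}$. For $i=1,2$ let $\mathfrak k_i=\{x\in\mathfrak u:\sigma_i(x)=x\}$ and $\mathfrak p_i=\{x\in\mathfrak u:\sigma_i(x)=-x\}$, so $\mathfrak u=\mathfrak k_i\oplus\mathfrak p_i$. Put $\mathfrak q_1=\mathfrak k_1\cap\mathfrak p_2$ and $\mathfrak q_2=\mathfrak k_2\cap\mathfrak p_1$. Assume: $\mathfrak k_1\cap\mathfrak k_2=\mathfrak s_1\oplus\mathfrak s_2$ for ideals $\mathfrak s_1,\mathfrak s_2$ of $\mathfrak k_1\cap\mathfrak k_2$; the subspaces $\mathfrak k_1':=\mathfrak s_2\oplus\mathfrak q_1$ and $\mathfrak k_2':=\mathfrak s_1\oplus\mathfrak q_2$ are Lie subalgebras; and $\mathfrak k_1=\mathfrak s_1\oplus\mathfrak k_1'$, $\mathfrak k_2=\mathfrak k_2'\oplus\mathfrak s_2$ as direct sums of Lie algebras (these are the Lie algebra versions of $K_1\cap K_2=S_1\times S_2$, $K_1=S_1\times K_1'$, $K_2=K_2'\times S_2$). *)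

theory Defs
  imports Complex_Main "HOL-Library.Function_Algebras"
begin

definition lie_algebra :: "(complex \<Rightarrow> 'g::ab_group_add \<Rightarrow> 'g) \<Rightarrow> ('g \<Rightarrow> 'g \<Rightarrow> 'g) \<Rightarrow> bool" where
  "lie_algebra scale br \<longleftrightarrow>
     vector_space scale \<and>
     (\<forall>x y z. br (x + y) z = br x z + br y z) \<and>
     (\<forall>x y z. br x (y + z) = br x y + br x z) \<and>
     (\<forall>c x y. br (scale c x) y = scale c (br x y)) \<and>
     (\<forall>c x y. br x (scale c y) = scale c (br x y)) \<and>
     (\<forall>x. br x x = 0) \<and>
     (\<forall>x y z. br x (br y z) + br y (br z x) + br z (br x y) = 0)"

definition lie_ideal :: "(complex \<Rightarrow> 'g::ab_group_add \<Rightarrow> 'g) \<Rightarrow> ('g \<Rightarrow> 'g \<Rightarrow> 'g) \<Rightarrow> 'g set \<Rightarrow> bool" where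
  "lie_ideal scale br I \<longleftrightarrow> module.subspace scale I \<and> (\<forall>x\<in>I. \<forall>y. br y x \<in> I)"

definition complex_simple_lie_algebra ::
  "(complex \<Rightarrow> 'g::ab_group_add \<Rightarrow> 'g) \<Rightarrow> ('g \<Rightarrow> 'g \<Rightarrow> 'g) \<Rightarrow> bool" where
  "complex_simple_lie_algebra scale br \<longleftrightarrow>
     lie_algebra scale br \<and>
     (\<exists>B. finite B \<and> module.span scale B = UNIV) \<and>
     (\<exists>x y. br x y \<noteq> 0) \<and>
     (\<forall>I. lie_ideal scale br I \<longrightarrow> I = {0} \<or> I = UNIV)"

definition conj_linear_involution ::
  "(complex \<Rightarrow> 'g::ab_group_add \<Rightarrow> 'g) \<Rightarrow> ('g \<Rightarrow> 'g \<Rightarrow> 'g) \<Rightarrow> ('g \<Rightarrow> 'g) \<Rightarrow> bool" where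
  "conj_linear_involution scale br t \<longleftrightarrow>
     (\<forall>x y. t (x + y) = t x + t y) \<and>
     (\<forall>c x. t (scale c x) = scale (cnj c) (t x)) \<and>
     (\<forall>x y. t (br x y) = br (t x) (t y)) \<and>
     (\<forall>x. t (t x) = x)"

definition linear_involution ::
  "(complex \<Rightarrow> 'g::ab_group_add \<Rightarrow> 'g) \<Rightarrow> ('g \<Rightarrow> 'g \<Rightarrow> 'g) \<Rightarrow> ('g \<Rightarrow> 'g) \<Rightarrow> bool" where
  "linear_involution scale br s \<longleftrightarrow>
     (\<forall>x y. s (x + y) = s x + s y) \<and>
     (\<forall>c x. s (scale c x) = scale c (s x)) \<and>
     (\<forall>x y. s (br x y) = br (s x) (s y)) \<and>
     (\<forall>x. s (s x) = x)"

definition real_subspace :: "(complex \<Rightarrow> 'g::ab_group_add \<Rightarrow> 'g) \<Rightarrow> 'g set \<Rightarrow> bool" where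
  "real_subspace scale S \<longleftrightarrow> 0 \<in> S \<and> (\<forall>x\<in>S. \<forall>y\<in>S. x + y \<in> S) \<and>
     (\<forall>r::real. \<forall>x\<in>S. scale (complex_of_real r) x \<in> S)"

definition real_lie_subalgebra ::
  "(complex \<Rightarrow> 'g::ab_group_add \<Rightarrow> 'g) \<Rightarrow> ('g \<Rightarrow> 'g \<Rightarrow> 'g) \<Rightarrow> 'g set \<Rightarrow> bool" where
  "real_lie_subalgebra scale br S \<longleftrightarrow> real_subspace scale S \<and> (\<forall>x\<in>S. \<forall>y\<in>S. br x y \<in> S)"

definition real_lie_ideal_of ::
  "(complex \<Rightarrow> 'g::ab_group_add \<Rightarrow> 'g) \<Rightarrow> ('g \<Rightarrow> 'g \<Rightarrow> 'g) \<Rightarrow> 'g set \<Rightarrow> 'g set \<Rightarrow> bool" where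
  "real_lie_ideal_of scale br I A \<longleftrightarrow> real_subspace scale I \<and> I \<subseteq> A \<and> (\<forall>x\<in>I. \<forall>y\<in>A. br y x \<in> I)"

definition set_sum :: "'g::ab_group_add set \<Rightarrow> 'g set \<Rightarrow> 'g set" where
  "set_sum A B = {a + b | a b. a \<in> A \<and> b \<in> B}"

definition fixset :: "('g \<Rightarrow> 'g) \<Rightarrow> 'g set" where
  "fixset f = {x. f x = x}"

definition negset :: "('g::ab_group_add \<Rightarrow> 'g) \<Rightarrow> 'g set" where
  "negset f = {x. f x = - x}"

definition twisted_laurent :: "'g::ab_group_add set \<Rightarrow> 'g set \<Rightarrow> (int \<Rightarrow> 'g) set" where
  "twisted_laurent K P = {xi. (\<exists>n0. \<forall>j>n0. xi j = 0) \<and>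
       (\<forall>j. even j \<longrightarrow> xi j \<in> K) \<and> (\<forall>j. odd j \<longrightarrow> xi j \<in> P)}"

text \<open>Bracket of Laurent series: coefficient k is the (finite) sum over i+j=k of [xi_i, eta_j];
  we sum over the indices where both factors are nonzero (finite for series bounded above).\<close>
definition laurent_br :: "('g::ab_group_add \<Rightarrow> 'g \<Rightarrow> 'g) \<Rightarrow> (int \<Rightarrow> 'g) \<Rightarrow> (int \<Rightarrow> 'g) \<Rightarrow> int \<Rightarrow> 'g" where
  "laurent_br br xi eta = (\<lambda>k. \<Sum>i | xi i \<noteq> 0 \<and> eta (k - i) \<noteq> 0. br (xi i) (eta (k - i)))"

text \<open>Evaluation at lambda = 1 (meaningful for Laurent polynomials).\<close>
definition eval_one :: "(int \<Rightarrow> 'g::comm_monoid_add) \<Rightarrow> 'g" where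
  "eval_one xi = (\<Sum>j | xi j \<noteq> 0. xi j)"

definition laurent_subalgebra ::
  "(complex \<Rightarrow> 'g::ab_group_add \<Rightarrow> 'g) \<Rightarrow> ('g \<Rightarrow> 'g \<Rightarrow> 'g) \<Rightarrow> (int \<Rightarrow> 'g) set \<Rightarrow> (int \<Rightarrow> 'g) set \<Rightarrow> bool" where
  "laurent_subalgebra scale br L S \<longleftrightarrow> S \<subseteq> L \<and> 0 \<in> S \<and>
     (\<forall>x\<in>S. \<forall>y\<in>S. x + y \<in> S) \<and>
     (\<forall>r::real. \<forall>x\<in>S. (\<lambda>j. scale (complex_of_real r) (x j)) \<in> S) \<and>
     (\<forall>x\<in>S. \<forall>y\<in>S. laurent_br br x y \<in> S)"

end

theory Submission
  imports Defs
begin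


lemma sum_closed_gen:
  assumes "0 \<in> S" "\<And>x y. x \<in> S \<Longrightarrow> y \<in> S \<Longrightarrow> x + y \<in> S" "\<And>i. i \<in> F \<Longrightarrow> f i \<in> S"
  shows "sum f F \<in> S"
  using assms(3)
proof (induction F rule: infinite_finite_induct)
  case (infinite A) then show ?case using assms(1) by simp
next
  case empty then show ?case using assms(1) by simp
next
  case (insert x F) then show ?case using assms(2) by simp
qed

locale LS = module scale
  for scale :: "complex \<Rightarrow> 'g::ab_group_add \<Rightarrow> 'g" +
  fixes br :: "'g \<Rightarrow> 'g \<Rightarrow> 'g"
    and tau sig1 sig2 :: "'g \<Rightarrow> 'g"
    and s1 s2 :: "'g set"
  assumes br_addL: "br (x + y) z = br x z + br y z"
    and br_addR: "br x (y + z) = br x y + br x z"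
    and tau_add: "tau (x + y) = tau x + tau y"
    and tau_scale: "tau (scale c x) = scale (cnj c) (tau x)"
    and tau_br: "tau (br x y) = br (tau x) (tau y)"
    and sig1_add: "sig1 (x + y) = sig1 x + sig1 y"
    and sig1_scale: "sig1 (scale c x) = scale c (sig1 x)"
    and sig1_br: "sig1 (br x y) = br (sig1 x) (sig1 y)"
    and sig2_add: "sig2 (x + y) = sig2 x + sig2 y"
    and sig2_scale: "sig2 (scale c x) = scale c (sig2 x)"
    and sig2_br: "sig2 (br x y) = br (sig2 x) (sig2 y)"
    and sig2_inv: "sig2 (sig2 x) = x"
    and comm12: "sig1 (sig2 x) = sig2 (sig1 x)"
    and comm2t: "sig2 (tau x) = tau (sig2 x)"
    and s1_sub: "real_subspace scale s1" "s1 \<subseteq> fixset tau \<inter> fixset sig1 \<inter> fixset sig2"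
    and s2_sub: "real_subspace scale s2" "s2 \<subseteq> fixset tau \<inter> fixset sig1 \<inter> fixset sig2"
    and k12_sum: "fixset tau \<inter> fixset sig1 \<inter> fixset sig2 = set_sum s1 s2"
    and kk1_sub: "real_lie_subalgebra scale br
                    (set_sum s2 (fixset tau \<inter> fixset sig1 \<inter> negset sig2))"
    and kk2_sub: "real_lie_subalgebra scale br
                    (set_sum s1 (fixset tau \<inter> fixset sig2 \<inter> negset sig1))"
    and k1_sum: "fixset tau \<inter> fixset sig1 =
                   set_sum s1 (set_sum s2 (fixset tau \<inter> fixset sig1 \<inter> negset sig2))"
    and k1_direct: "s1 \<inter> set_sum s2 (fixset tau \<inter> fixset sig1 \<inter> negset sig2) = {0}"
    and k2_sum: "fixset tau \<inter> fixset sig2 =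
                   set_sum (set_sum s1 (fixset tau \<inter> fixset sig2 \<inter> negset sig1)) s2"
    and k2_direct: "set_sum s1 (fixset tau \<inter> fixset sig2 \<inter> negset sig1) \<inter> s2 = {0}"
begin

interpretation bl: additive "\<lambda>x. br x y" by standard (rule br_addL)
interpretation br': additive "\<lambda>y. br x y" for x by standard (rule br_addR)
interpretation t: additive tau by standard (rule tau_add)
interpretation a1: additive sig1 by standard (rule sig1_add)
interpretation a2: additive sig2 by standard (rule sig2_add)

lemma br0 [simp]: "br 0 y = 0" "br x 0 = 0" by (rule bl.zero, rule br'.zero)
lemma brminus [simp]: "br (-x) y = - br x y" "br x (-y) = - br x y" by (rule bl.minus, rule br'.minus)
lemma brsumL: "br (sum f A) y = (\<Sum>i\<in>A. br (f i) y)" by (rule bl.sum)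
lemma brsumR: "br x (sum f A) = (\<Sum>i\<in>A. br x (f i))" by (rule br'.sum)
lemma maps0 [simp]: "tau 0 = 0" "sig1 0 = 0" "sig2 0 = 0"
  by (rule t.zero, rule a1.zero, rule a2.zero)
lemma mapsminus [simp]: "tau (-x) = - tau x" "sig1 (-x) = - sig1 x" "sig2 (-x) = - sig2 x"
  by (rule t.minus, rule a1.minus, rule a2.minus)
lemma mapsdiff [simp]: "tau (x-y) = tau x - tau y" "sig1 (x-y) = sig1 x - sig1 y" "sig2 (x-y) = sig2 x - sig2 y"
  by (rule t.diff, rule a1.diff, rule a2.diff)
lemma mapsadd [simp]: "tau (x+y) = tau x + tau y" "sig1 (x+y) = sig1 x + sig1 y" "sig2 (x+y) = sig2 x + sig2 y"
  by (rule tau_add, rule sig1_add, rule sig2_add)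
lemma mapssum: "sig2 (sum f A) = (\<Sum>i\<in>A. sig2 (f i))" by (rule a2.sum)

lemma rs_closed:
  assumes "real_subspace scale S"
  shows "0 \<in> S" "x \<in> S \<Longrightarrow> y \<in> S \<Longrightarrow> x + y \<in> S"
    "x \<in> S \<Longrightarrow> scale (complex_of_real r) x \<in> S"
    "x \<in> S \<Longrightarrow> - x \<in> S" "x \<in> S \<Longrightarrow> y \<in> S \<Longrightarrow> x - y \<in> S"
proof -
  show "0 \<in> S" "x \<in> S \<Longrightarrow> y \<in> S \<Longrightarrow> x + y \<in> S"
    "x \<in> S \<Longrightarrow> scale (complex_of_real r) x \<in> S" using assms unfolding real_subspace_def by auto
  have n: "- z \<in> S" if "z \<in> S" for z
    using assms that unfolding real_subspace_def
    by (metis (no_types, lifting) of_real_1 of_real_minus scale_minus_left scale_one)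
  show "x \<in> S \<Longrightarrow> - x \<in> S" by (rule n)
  show "x \<in> S \<Longrightarrow> y \<in> S \<Longrightarrow> x - y \<in> S"
    using n assms unfolding real_subspace_def by (metis diff_conv_add_uminus)
qed

abbreviation "K1 \<equiv> fixset tau \<inter> fixset sig1"
abbreviation "P1 \<equiv> fixset tau \<inter> negset sig1"
abbreviation "q1 \<equiv> fixset tau \<inter> fixset sig1 \<inter> negset sig2"
abbreviation "q2 \<equiv> fixset tau \<inter> fixset sig2 \<inter> negset sig1"
abbreviation "kk1 \<equiv> set_sum s2 q1"
abbreviation "kk2 \<equiv> set_sum s1 q2"
abbreviation "LL \<equiv> twisted_laurent K1 P1"
definition C :: "int \<Rightarrow> 'g set" where "C j = (if even j then K1 else P1)"

lemma C_simps: "x \<in> C j \<longleftrightarrow> tau x = x \<and> sig1 x = (if even j then x else - x)"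
  unfolding C_def fixset_def negset_def by auto

lemma C0 [simp]: "0 \<in> C j" by (simp add: C_simps)
lemma C_add: "x \<in> C j \<Longrightarrow> y \<in> C j \<Longrightarrow> x + y \<in> C j" by (simp add: C_simps split: if_splits)
lemma C_minus: "x \<in> C j \<Longrightarrow> - x \<in> C j" by (simp add: C_simps split: if_splits)
lemma C_diff: "x \<in> C j \<Longrightarrow> y \<in> C j \<Longrightarrow> x - y \<in> C j" by (simp add: C_simps split: if_splits)
lemma C_scale: "x \<in> C j \<Longrightarrow> scale (complex_of_real r) x \<in> C j"
  by (simp add: C_simps tau_scale sig1_scale split: if_splits)
lemma C_sig2: "x \<in> C j \<Longrightarrow> sig2 x \<in> C j"
  by (simp add: C_simps comm12 comm2t[symmetric] split: if_splits)
lemma C_br: "x \<in> C i \<Longrightarrow> y \<in> C j \<Longrightarrow> br x y \<in> C (i + j)"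
  by (cases "even i"; cases "even j"; simp add: C_simps tau_br sig1_br)
lemma C_sum: "(\<And>i. i \<in> F \<Longrightarrow> f i \<in> C j) \<Longrightarrow> sum f F \<in> C j"
  by (rule sum_closed_gen) (auto intro: C_add)
lemma C_parity: "C (- j) = C j" "C (k - i) = C (k + i)"
proof -
  have "even (-j) \<longleftrightarrow> even j" by presburger
  moreover have "even (k-i) \<longleftrightarrow> even (k+i)" by presburger
  ultimately
  show "C (- j) = C j" "C (k - i) = C (k + i)" by (simp_all add: C_def)
qed

lemma L_iff: "xi \<in> LL \<longleftrightarrow> (\<exists>n0. \<forall>j>n0. xi j = 0) \<and> (\<forall>j. xi j \<in> C j)"
  unfolding twisted_laurent_def C_def by auto

lemma lb_eq:
  assumes "finite F" "{i. xi i \<noteq> 0 \<and> eta (k - i) \<noteq> 0} \<subseteq> F"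
  shows "laurent_br br xi eta k = (\<Sum>i\<in>F. br (xi i) (eta (k - i)))"
  unfolding laurent_br_def
  by (rule sum.mono_neutral_left) (use assms in auto)

lemma ev_eq:
  assumes "finite F" "{j. xi j \<noteq> 0} \<subseteq> F"
  shows "eval_one xi = (\<Sum>j\<in>F. xi j)"
  unfolding eval_one_def
  by (rule sum.mono_neutral_left) (use assms in auto)

lemma L_br:
  assumes "xi \<in> LL" "eta \<in> LL"
  shows "laurent_br br xi eta \<in> LL"
proof -
  obtain n m where n: "\<forall>j>n. xi j = 0" and m: "\<forall>j>m. eta j = 0" and
    cx: "\<forall>j. xi j \<in> C j" and ce: "\<forall>j. eta j \<in> C j"
    using assms by (auto simp: L_iff)
  have "\<forall>k>n+m. laurent_br br xi eta k = 0"
  proof (intro allI impI)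
    fix k :: int assume k: "k > n + m"
    have e: "{i. xi i \<noteq> 0 \<and> eta (k - i) \<noteq> 0} = {}"
    proof -
      have False if "xi i \<noteq> 0" "eta (k - i) \<noteq> 0" for i
      proof -
        have "i \<le> n" using n that(1) by (meson not_le)
        moreover have "k - i \<le> m" using m that(2) by (meson not_le)
        ultimately show False using k by linarith
      qed
      then show ?thesis by auto
    qed
    then show "laurent_br br xi eta k = 0" unfolding laurent_br_def by (simp only: e sum.empty)
  qed
  moreover have "laurent_br br xi eta k \<in> C k" for k
    unfolding laurent_br_def
  proof (rule C_sum)
    fix i
    have "br (xi i) (eta (k - i)) \<in> C (i + (k - i))" by (rule C_br) (use cx ce in auto)
    then show "br (xi i) (eta (k - i)) \<in> C k" by simp
  qed
  ultimately show ?thesis by (auto simp: L_iff)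
qed

abbreviation "Lp \<equiv> {xi \<in> LL. (\<forall>j. xi (- j) = sig2 (xi j)) \<and> eval_one xi \<in> kk2}"
abbreviation "Lm \<equiv> {xi \<in> LL. (\<forall>j>0. xi j = 0) \<and> xi 0 \<in> kk1}"

lemma kk1_rs: "real_subspace scale kk1" and kk2_rs: "real_subspace scale kk2"
  using kk1_sub kk2_sub unfolding real_lie_subalgebra_def by auto
lemma kk1_br: "x \<in> kk1 \<Longrightarrow> y \<in> kk1 \<Longrightarrow> br x y \<in> kk1"
  and kk2_br: "x \<in> kk2 \<Longrightarrow> y \<in> kk2 \<Longrightarrow> br x y \<in> kk2"
  using kk1_sub kk2_sub unfolding real_lie_subalgebra_def by auto
lemma zero_q [simp]: "0 \<in> q1" "0 \<in> q2" by (auto simp: fixset_def negset_def)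
lemma s1_kk2: "x \<in> s1 \<Longrightarrow> x \<in> kk2"
  unfolding set_sum_def by (rule CollectI, rule exI[of _ x], rule exI[of _ 0]) (auto simp: fixset_def negset_def)
lemma q2_kk2: "x \<in> q2 \<Longrightarrow> x \<in> kk2"
  unfolding set_sum_def using rs_closed(1)[OF s1_sub(1)]
  by (intro CollectI exI[of _ 0] exI[of _ x]) auto
lemma s2_kk1: "x \<in> s2 \<Longrightarrow> x \<in> kk1"
  unfolding set_sum_def by (rule CollectI, rule exI[of _ x], rule exI[of _ 0]) (auto simp: fixset_def negset_def)

lemma L_zero: "0 \<in> LL" by (auto simp: L_iff)
lemma L_add: assumes "xi \<in> LL" "eta \<in> LL" shows "xi + eta \<in> LL"
proof -
  obtain n m where n: "\<forall>j>n. xi j = 0" and m: "\<forall>j>m. eta j = 0" and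
    cx: "\<forall>j. xi j \<in> C j" and ce: "\<forall>j. eta j \<in> C j"
    using assms by (auto simp: L_iff)
  have "\<forall>j>max n m. (xi + eta) j = 0" using n m by auto
  moreover have "\<forall>j. (xi + eta) j \<in> C j" using cx ce by (auto intro: C_add)
  ultimately show ?thesis unfolding L_iff by blast
qed
lemma L_diff: assumes "xi \<in> LL" "eta \<in> LL" shows "xi - eta \<in> LL"
proof -
  obtain n m where n: "\<forall>j>n. xi j = 0" and m: "\<forall>j>m. eta j = 0" and
    cx: "\<forall>j. xi j \<in> C j" and ce: "\<forall>j. eta j \<in> C j"
    using assms by (auto simp: L_iff)
  have "\<forall>j>max n m. (xi - eta) j = 0" using n m by auto
  moreover have "\<forall>j. (xi - eta) j \<in> C j" using cx ce by (auto intro: C_diff)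
  ultimately show ?thesis unfolding L_iff by blast
qed
lemma L_scale: assumes "xi \<in> LL" shows "(\<lambda>j. scale (complex_of_real r) (xi j)) \<in> LL"
  using assms unfolding L_iff by (metis scale_zero_right C_scale)

lemma sym_support:
  assumes "xi \<in> LL" "\<forall>j. xi (- j) = sig2 (xi j)"
  shows "\<exists>N::int. N \<ge> 0 \<and> {j. xi j \<noteq> 0} \<subseteq> {-N..N}"
proof -
  obtain n where n: "\<forall>j>n. xi j = 0" using assms by (auto simp: L_iff)
  have "{j. xi j \<noteq> 0} \<subseteq> {-max n 0..max n 0}"
  proof
    fix j assume j: "j \<in> {j. xi j \<noteq> 0}"
    have "j \<le> max n 0" using n j by (meson mem_Collect_eq max.cobounded1 order.trans not_le)
    moreover have "- j \<le> max n 0"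
    proof (rule ccontr)
      assume "\<not> - j \<le> max n 0"
      then have "xi (- j) = 0" using n by auto
      then have "xi (- (- j)) = 0" using assms(2) by (metis maps0(3))
      then show False using j by simp
    qed
    ultimately show "j \<in> {-max n 0..max n 0}" by auto
  qed
  then show ?thesis by (intro exI[of _ "max n 0"]) auto
qed

lemma sub_mono: "A \<subseteq> {-a..a} \<Longrightarrow> a \<le> (b::int) \<Longrightarrow> A \<subseteq> {-b..b}" by auto

lemma ev_zero: "eval_one (0::int \<Rightarrow> 'g) = 0" unfolding eval_one_def by simp

lemma Lp_zero: "0 \<in> Lp" using L_zero ev_zero rs_closed(1)[OF kk2_rs] by simp

lemma Lp_add: assumes "xi \<in> Lp" "eta \<in> Lp" shows "xi + eta \<in> Lp"
proof -
  obtain N1 where N1: "{j. xi j \<noteq> 0} \<subseteq> {-N1..N1}" using sym_support assms(1) by blast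
  obtain N2 where N2: "{j. eta j \<noteq> 0} \<subseteq> {-N2..N2}" using sym_support assms(2) by blast
  define N where "N = max N1 N2"
  have F1: "{j. xi j \<noteq> 0} \<subseteq> {-N..N}" by (rule sub_mono[OF N1]) (simp add: N_def)
  have F2: "{j. eta j \<noteq> 0} \<subseteq> {-N..N}" by (rule sub_mono[OF N2]) (simp add: N_def)
  have F3: "{j. (xi + eta) j \<noteq> 0} \<subseteq> {-N..N}"
  proof
    fix x assume "x \<in> {j. (xi + eta) j \<noteq> 0}"
    then have "xi x \<noteq> 0 \<or> eta x \<noteq> 0" by auto
    then show "x \<in> {-N..N}" using F1 F2 by blast
  qed
  have "eval_one (xi + eta) = eval_one xi + eval_one eta"
    using ev_eq[OF _ F1] ev_eq[OF _ F2] ev_eq[OF _ F3] by (simp add: sum.distrib plus_fun_def)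
  then have "eval_one (xi + eta) \<in> kk2" using assms rs_closed(2)[OF kk2_rs] by simp
  then show ?thesis using assms L_add by auto
qed

lemma Lp_scale: assumes "xi \<in> Lp" shows "(\<lambda>j. scale (complex_of_real r) (xi j)) \<in> Lp"
proof -
  obtain N where N: "{j. xi j \<noteq> 0} \<subseteq> {-N..N}" using sym_support assms by blast
  have F: "{j. scale (complex_of_real r) (xi j) \<noteq> 0} \<subseteq> {-N..N}" using N by auto
  have "eval_one (\<lambda>j. scale (complex_of_real r) (xi j)) = scale (complex_of_real r) (eval_one xi)"
    using ev_eq[OF _ N] ev_eq[OF _ F] by (simp add: scale_sum_right)
  then show ?thesis using assms L_scale rs_closed(3)[OF kk2_rs] by (simp add: sig2_scale)
qed

lemma reflect_sum: "(\<Sum>i\<in>{-N..N::int}. g (- i)) = (\<Sum>i\<in>{-N..N}. g i)"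
  by (rule sum.reindex_bij_witness[of _ uminus uminus]) auto

lemma shift_sum:
  assumes "i \<in> {-N..N::int}" "\<And>j. j \<notin> {-N..N} \<Longrightarrow> h j = 0"
  shows "(\<Sum>k\<in>{-2*N..2*N}. h (k - i)) = (\<Sum>j\<in>{-N..N}. h j)"
proof -
  have "(\<Sum>k\<in>{-2*N..2*N}. h (k - i)) = (\<Sum>k\<in>(\<lambda>j. j + i) ` {-N..N}. h (k - i))"
  proof (rule sum.mono_neutral_right)
    show "finite {-2*N..2*N}" by simp
    show "(\<lambda>j. j + i) ` {-N..N} \<subseteq> {-2*N..2*N}" using assms(1) by auto
    show "\<forall>k\<in>{-2*N..2*N} - (\<lambda>j. j + i) ` {-N..N}. h (k - i) = 0"
    proof
      fix k assume k: "k \<in> {-2*N..2*N} - (\<lambda>j. j + i) ` {-N..N}"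
      have "k - i \<notin> {-N..N}"
      proof
        assume "k - i \<in> {-N..N}"
        then have "k \<in> (\<lambda>j. j + i) ` {-N..N}" by (intro image_eqI[of _ _ "k - i"]) auto
        then show False using k by blast
      qed
      then show "h (k - i) = 0" by (rule assms(2))
    qed
  qed
  also have "\<dots> = (\<Sum>j\<in>{-N..N}. h j)"
    by (subst sum.reindex) (auto simp: inj_on_def)
  finally show ?thesis .
qed

lemma Lp_br: assumes "xi \<in> Lp" "eta \<in> Lp" shows "laurent_br br xi eta \<in> Lp"
proof -
  obtain N1 where N1: "{j. xi j \<noteq> 0} \<subseteq> {-N1..N1}" using sym_support assms(1) by blast
  obtain N2 where N2: "{j. eta j \<noteq> 0} \<subseteq> {-N2..N2}" using sym_support assms(2) by blast
  define N where "N = max N1 N2"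
  define F where "F = {-N..N}"
  have F1: "{j. xi j \<noteq> 0} \<subseteq> F" unfolding F_def by (rule sub_mono[OF N1]) (simp add: N_def)
  have F2: "{j. eta j \<noteq> 0} \<subseteq> F" unfolding F_def by (rule sub_mono[OF N2]) (simp add: N_def)
  have fF: "finite F" unfolding F_def by simp
  have lbF: "laurent_br br xi eta k = (\<Sum>i\<in>F. br (xi i) (eta (k - i)))" for k
    by (rule lb_eq[OF fF]) (use F1 in auto)
  have sx: "\<forall>j. xi (- j) = sig2 (xi j)" and se: "\<forall>j. eta (- j) = sig2 (eta j)" using assms by auto
  have sym: "laurent_br br xi eta (- k) = sig2 (laurent_br br xi eta k)" for k
  proof -
    have "sig2 (laurent_br br xi eta k) = (\<Sum>i\<in>F. br (sig2 (xi i)) (sig2 (eta (k - i))))"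
      unfolding lbF by (simp add: mapssum sig2_br)
    also have "\<dots> = (\<Sum>i\<in>F. br (xi (- i)) (eta (- (k - i))))"
      by (simp only: sx[rule_format, symmetric] se[rule_format, symmetric])
    also have "\<dots> = (\<Sum>i\<in>F. (\<lambda>i. br (xi i) (eta (- k - i))) (- i))"
      by (intro sum.cong refl) (simp add: algebra_simps)
    also have "\<dots> = (\<Sum>i\<in>F. br (xi i) (eta (- k - i)))"
      unfolding F_def using reflect_sum[of "\<lambda>i. br (xi i) (eta (- k - i))" N] by simp
    finally show ?thesis unfolding lbF by simp
  qed
  define G where "G = {-2*N..2*N}"
  have G: "{k. laurent_br br xi eta k \<noteq> 0} \<subseteq> G"
  proof
    fix k assume "k \<in> {k. laurent_br br xi eta k \<noteq> 0}"
    then have kk: "laurent_br br xi eta k \<noteq> 0" by simp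
    have "{i. xi i \<noteq> 0 \<and> eta (k - i) \<noteq> 0} \<noteq> {}"
    proof
      assume e: "{i. xi i \<noteq> 0 \<and> eta (k - i) \<noteq> 0} = {}"
      have "laurent_br br xi eta k = 0" unfolding laurent_br_def by (simp only: e sum.empty)
      then show False using kk by simp
    qed
    then obtain i where "xi i \<noteq> 0" "eta (k - i) \<noteq> 0" by blast
    then have "i \<in> F" "k - i \<in> F" using F1 F2 by auto
    then show "k \<in> G" unfolding F_def G_def by auto
  qed
  have "eval_one (laurent_br br xi eta) = (\<Sum>k\<in>G. \<Sum>i\<in>F. br (xi i) (eta (k - i)))"
    using ev_eq[OF _ G] unfolding G_def lbF by simp
  also have "\<dots> = (\<Sum>i\<in>F. \<Sum>k\<in>G. br (xi i) (eta (k - i)))" by (rule sum.swap)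
  also have "\<dots> = (\<Sum>i\<in>F. \<Sum>j\<in>F. br (xi i) (eta j))"
  proof (rule sum.cong[OF refl])
    fix i assume "i \<in> F"
    show "(\<Sum>k\<in>G. br (xi i) (eta (k - i))) = (\<Sum>j\<in>F. br (xi i) (eta j))"
      unfolding G_def F_def
    proof (rule shift_sum)
      show "i \<in> {-N..N}" using \<open>i \<in> F\<close> by (simp add: F_def)
      fix j assume "j \<notin> {-N..N}"
      then have "eta j = 0" using F2 unfolding F_def by blast
      then show "br (xi i) (eta j) = 0" by simp
    qed
  qed
  also have "\<dots> = (\<Sum>i\<in>F. br (xi i) (\<Sum>j\<in>F. eta j))" by (simp add: brsumR)
  also have "\<dots> = br (\<Sum>i\<in>F. xi i) (\<Sum>j\<in>F. eta j)" by (simp add: brsumL)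
  also have "\<dots> = br (eval_one xi) (eval_one eta)"
    using ev_eq[OF fF F1] ev_eq[OF fF F2] by simp
  finally have "eval_one (laurent_br br xi eta) \<in> kk2"
    using assms kk2_br by simp
  then show ?thesis using sym L_br assms by auto
qed

lemma Lm_zero: "0 \<in> Lm" using L_zero rs_closed(1)[OF kk1_rs] by simp
lemma Lm_add: "xi \<in> Lm \<Longrightarrow> eta \<in> Lm \<Longrightarrow> xi + eta \<in> Lm"
  using L_add rs_closed(2)[OF kk1_rs] by simp
lemma Lm_scale: "xi \<in> Lm \<Longrightarrow> (\<lambda>j. scale (complex_of_real r) (xi j)) \<in> Lm"
  using L_scale rs_closed(3)[OF kk1_rs] by simp

lemma Lm_br: assumes "xi \<in> Lm" "eta \<in> Lm" shows "laurent_br br xi eta \<in> Lm"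
proof -
  have x: "\<forall>j>0. xi j = 0" and e: "\<forall>j>0. eta j = 0" and x0: "xi 0 \<in> kk1" and e0: "eta 0 \<in> kk1"
    using assms by auto
  have pos: "laurent_br br xi eta k = 0" if k: "k > 0" for k
  proof -
    have "laurent_br br xi eta k = (\<Sum>i\<in>{}. br (xi i) (eta (k - i)))"
    proof (rule lb_eq)
      show "{i. xi i \<noteq> 0 \<and> eta (k - i) \<noteq> 0} \<subseteq> {}"
      proof
        fix i assume i: "i \<in> {i. xi i \<noteq> 0 \<and> eta (k - i) \<noteq> 0}"
        then have "\<not> i > 0" "\<not> k - i > 0" using x e by auto
        then show "i \<in> {}" using k by linarith
      qed
    qed simp
    then show ?thesis by simp
  qed
  have "laurent_br br xi eta 0 = (\<Sum>i\<in>{0}. br (xi i) (eta (0 - i)))"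
  proof (rule lb_eq)
    show "{i. xi i \<noteq> 0 \<and> eta (0 - i) \<noteq> 0} \<subseteq> {0}"
    proof
      fix i assume i: "i \<in> {i. xi i \<noteq> 0 \<and> eta (0 - i) \<noteq> 0}"
      then have "\<not> i > 0" "\<not> 0 - i > 0" using x e by auto
      then show "i \<in> {0}" by simp
    qed
  qed simp
  then have "laurent_br br xi eta 0 = br (xi 0) (eta 0)" by simp
  then have "laurent_br br xi eta 0 \<in> kk1" using kk1_br[OF x0 e0] by simp
  then show ?thesis using pos L_br assms by auto
qed

lemma sum_sym_split:
  "(\<Sum>j\<in>{-int m..int m}. f j) = f 0 + (\<Sum>j\<in>{1..int m}. (f j + f (-j)))"
proof (induction m)
  case 0 then show ?case by simp
next
  case (Suc m)
  have e1: "{-int (Suc m)..int (Suc m)} = insert (int m + 1) (insert (- (int m + 1)) {-int m..int m})"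
    by auto
  have e2: "{1..int (Suc m)} = insert (int m + 1) {1..int m}" by auto
  show ?case unfolding e1 e2 using Suc by (simp add: algebra_simps)
qed

lemma K12_sub: "s1 \<subseteq> C 0" "s2 \<subseteq> C 0" "s1 \<subseteq> fixset sig2" "s2 \<subseteq> fixset sig2"
  using s1_sub(2) s2_sub(2) by (auto simp: C_def)

lemma exists_decomp:
  assumes A: "A \<in> LL"
  shows "\<exists>xi eta. xi \<in> Lp \<and> eta \<in> Lm \<and> A = xi + eta"
proof -
  obtain n where n: "\<forall>j>n. A j = 0" and cA: "\<forall>j. A j \<in> C j" using A by (auto simp: L_iff)
  define m where "m = nat (max n 0)"
  have mn: "int m \<ge> n" "int m \<ge> 0" unfolding m_def by auto
  define B where "B = (\<Sum>j\<in>{1..int m}. (A j + sig2 (A j)))"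
  have "B \<in> fixset tau \<inter> fixset sig2" unfolding B_def
  proof (rule sum_closed_gen)
    show "0 \<in> fixset tau \<inter> fixset sig2" by (simp add: fixset_def)
    show "x + y \<in> fixset tau \<inter> fixset sig2" if "x \<in> fixset tau \<inter> fixset sig2" "y \<in> fixset tau \<inter> fixset sig2" for x y
      using that by (simp add: fixset_def)
    fix j
    have "tau (A j) = A j" using cA[rule_format, of j] by (simp add: C_simps)
    then show "A j + sig2 (A j) \<in> fixset tau \<inter> fixset sig2"
      by (simp add: fixset_def comm2t[symmetric] sig2_inv add.commute)
  qed
  then have "B \<in> set_sum kk2 s2" by (subst (asm) k2_sum) assumption
  then obtain k b2 where k: "k \<in> kk2" and b2: "b2 \<in> s2" and Bk: "B = k + b2"
    unfolding set_sum_def by blast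
  have "A 0 \<in> K1" using cA[rule_format, of 0] by (simp add: C_def)
  then have "A 0 \<in> set_sum s1 kk1" by (subst (asm) k1_sum) assumption
  then obtain a1 a' where a1: "a1 \<in> s1" and a': "a' \<in> kk1" and A0: "A 0 = a1 + a'"
    unfolding set_sum_def by blast
  define x0 where "x0 = a1 - b2"
  have x0C: "x0 \<in> C 0" unfolding x0_def using K12_sub a1 b2 by (auto intro: C_diff)
  have x0s: "sig2 x0 = x0" unfolding x0_def using K12_sub(3,4) a1 b2 by (simp add: fixset_def subset_iff)
  define xi where "xi = (\<lambda>j. if j > 0 then A j else if j < 0 then sig2 (A (- j)) else x0)"
  define eta where "eta = A - xi"
  have xiL: "xi \<in> LL"
  proof -
    have "\<forall>j>int m. xi j = 0" using n mn unfolding xi_def by auto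
    moreover have "xi j \<in> C j" for j
    proof -
      consider "j > 0" | "j < 0" | "j = 0" by linarith
      then show ?thesis
      proof cases
        case 1 then show ?thesis using cA by (simp add: xi_def)
      next
        case 2 then show ?thesis using C_sig2[OF cA[rule_format, of "-j"]] by (simp add: xi_def C_parity)
      next
        case 3 then show ?thesis using x0C by (simp add: xi_def)
      qed
    qed
    ultimately show ?thesis unfolding L_iff by blast
  qed
  have xisym: "\<forall>j. xi (- j) = sig2 (xi j)"
  proof
    fix j :: int
    consider "j > 0" | "j < 0" | "j = 0" by linarith
    then show "xi (- j) = sig2 (xi j)"
      by cases (auto simp: xi_def sig2_inv x0s)
  qed
  have supp: "{j. xi j \<noteq> 0} \<subseteq> {-int m..int m}"
  proof
    fix j assume j: "j \<in> {j. xi j \<noteq> 0}"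
    have "\<not> j > int m" using j n mn unfolding xi_def by auto
    moreover have "\<not> - j > int m" using j n mn unfolding xi_def by auto
    ultimately show "j \<in> {-int m..int m}" by auto
  qed
  have "eval_one xi = (\<Sum>j\<in>{-int m..int m}. xi j)" by (rule ev_eq[OF _ supp]) simp
  also have "\<dots> = xi 0 + (\<Sum>j\<in>{1..int m}. (xi j + xi (- j)))" by (rule sum_sym_split)
  also have "\<dots> = x0 + B" unfolding B_def by (intro arg_cong2[where f="(+)"] sum.cong) (auto simp: xi_def)
  also have "\<dots> = a1 + k" unfolding x0_def Bk by simp
  finally have "eval_one xi \<in> kk2" using rs_closed(2)[OF kk2_rs s1_kk2[OF a1] k] by simp
  then have xiP: "xi \<in> Lp" using xiL xisym by simp
  have etaL: "eta \<in> LL" unfolding eta_def by (rule L_diff[OF A xiL])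
  have "eta 0 = a' + b2" unfolding eta_def xi_def x0_def using A0 by simp
  then have "eta 0 \<in> kk1" using rs_closed(2)[OF kk1_rs a' s2_kk1[OF b2]] by simp
  moreover have "\<forall>j>0. eta j = 0" unfolding eta_def xi_def by simp
  ultimately have "eta \<in> Lm" using etaL by simp
  moreover have "A = xi + eta" unfolding eta_def by simp
  ultimately show ?thesis using xiP by blast
qed

lemma unique_decomp:
  assumes "xi \<in> Lp" "xi' \<in> Lp" "eta \<in> Lm" "eta' \<in> Lm" "xi + eta = xi' + eta'"
  shows "xi = xi'"
proof -
  have pos: "xi j = xi' j" if "j > 0" for j
    using fun_cong[OF assms(5), of j] assms(3,4) that by auto
  have neg: "xi j = xi' j" if "j < 0" for j
  proof -
    have "xi (- (- j)) = sig2 (xi (- j))" "xi' (- (- j)) = sig2 (xi' (- j))" using assms(1,2) by blast+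
    then show ?thesis using pos[of "-j"] that by simp
  qed
  define d where "d = xi 0 - xi' 0"
  have "d = eta' 0 - eta 0" using fun_cong[OF assms(5), of 0] unfolding d_def by (simp add: algebra_simps)
  then have dk1: "d \<in> kk1" using assms(3,4) rs_closed(5)[OF kk1_rs] by simp
  have "xi 0 \<in> C 0" "xi' 0 \<in> C 0" using assms(1,2) by (auto simp: L_iff)
  moreover have "sig2 (xi 0) = xi 0" "sig2 (xi' 0) = xi' 0"
  proof -
    have "\<forall>j. xi (-j) = sig2 (xi j)" "\<forall>j. xi' (-j) = sig2 (xi' j)" using assms(1,2) by blast+
    then show "sig2 (xi 0) = xi 0" "sig2 (xi' 0) = xi' 0" by (metis minus_zero)+
  qed
  ultimately have "d \<in> fixset tau \<inter> fixset sig1 \<inter> fixset sig2"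
    unfolding d_def by (auto simp: C_def fixset_def)
  then obtain c1 c2 where c1: "c1 \<in> s1" and c2: "c2 \<in> s2" and dc: "d = c1 + c2"
    unfolding k12_sum set_sum_def by blast
  obtain N1 where N1: "{j. xi j \<noteq> 0} \<subseteq> {-N1..N1}" and N1p: "N1 \<ge> 0" using sym_support assms(1) by blast
  obtain N2 where N2: "{j. xi' j \<noteq> 0} \<subseteq> {-N2..N2}" using sym_support assms(2) by blast
  define N where "N = max N1 N2"
  have F1: "{j. xi j \<noteq> 0} \<subseteq> {-N..N}" by (rule sub_mono[OF N1]) (simp add: N_def)
  have F2: "{j. xi' j \<noteq> 0} \<subseteq> {-N..N}" by (rule sub_mono[OF N2]) (simp add: N_def)
  have "eval_one xi - eval_one xi' = (\<Sum>j\<in>{-N..N}. xi j - xi' j)"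
    using ev_eq[OF _ F1] ev_eq[OF _ F2] by (simp add: sum_subtractf)
  also have "\<dots> = (\<Sum>j\<in>{-N..N}. if j = 0 then d else 0)"
  proof (rule sum.cong[OF refl])
    fix j show "xi j - xi' j = (if j = 0 then d else 0)"
      using pos[of j] neg[of j] unfolding d_def by (cases "j = 0") (auto simp: linorder_neq_iff)
  qed
  also have "\<dots> = d" using N1p by (simp add: N_def le_max_iff_disj)
  finally have ev: "eval_one xi - eval_one xi' = d" .
  have "eval_one xi \<in> kk2" "eval_one xi' \<in> kk2" using assms(1,2) by blast+
  from rs_closed(5)[OF kk2_rs this] have "d \<in> kk2" using ev by simp
  have "c1 = d - c2" using dc by simp
  then have "c1 \<in> kk1" using rs_closed(5)[OF kk1_rs dk1 s2_kk1[OF c2]] by simp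
  then have "c1 = 0" using k1_direct c1 by blast
  then have "d \<in> s2" using dc c2 by simp
  then have "d = 0" using k2_direct \<open>d \<in> kk2\<close> by blast
  then have "xi 0 = xi' 0" unfolding d_def by simp
  then show ?thesis
  proof (intro ext)
    fix j :: int
    assume z: "xi 0 = xi' 0"
    consider "j > 0" | "j < 0" | "j = 0" by linarith
    then show "xi j = xi' j" by cases (use pos neg z in auto)
  qed
qed

lemma main:
  "let L = twisted_laurent (fixset tau \<inter> fixset sig1) (fixset tau \<inter> negset sig1);
         k1' = set_sum s2 (fixset tau \<inter> fixset sig1 \<inter> negset sig2);
         k2' = set_sum s1 (fixset tau \<inter> fixset sig2 \<inter> negset sig1);
         Lplus = {xi \<in> L. (\<forall>j. xi (- j) = sig2 (xi j)) \<and> eval_one xi \<in> k2'};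
         Lminus = {xi \<in> L. (\<forall>j>0. xi j = 0) \<and> xi 0 \<in> k1'}
     in laurent_subalgebra scale br L Lplus \<and> laurent_subalgebra scale br L Lminus \<and>
        (\<forall>A\<in>L. \<exists>!p. fst p \<in> Lplus \<and> snd p \<in> Lminus \<and> A = fst p + snd p)"
proof -
  have h1: "laurent_subalgebra scale br LL Lp"
    unfolding laurent_subalgebra_def
  proof (intro conjI ballI allI)
    show "Lp \<subseteq> LL" by blast
  qed (fact Lp_zero | erule (1) Lp_add | erule Lp_scale | erule (1) Lp_br)+
  have h2: "laurent_subalgebra scale br LL Lm"
    unfolding laurent_subalgebra_def
  proof (intro conjI ballI allI)
    show "Lm \<subseteq> LL" by blast
  qed (fact Lm_zero | erule (1) Lm_add | erule Lm_scale | erule (1) Lm_br)+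
  have h3: "\<forall>A\<in>LL. \<exists>!p. fst p \<in> Lp \<and> snd p \<in> Lm \<and> A = fst p + snd p"
  proof
    fix A assume A: "A \<in> LL"
    obtain xi eta where d: "xi \<in> Lp" "eta \<in> Lm" "A = xi + eta" using exists_decomp[OF A] by blast
    show "\<exists>!p. fst p \<in> Lp \<and> snd p \<in> Lm \<and> A = fst p + snd p"
    proof (rule ex1I[of _ "(xi, eta)"])
      show "fst (xi, eta) \<in> Lp \<and> snd (xi, eta) \<in> Lm \<and> A = fst (xi, eta) + snd (xi, eta)" using d by simp
      fix p assume p: "fst p \<in> Lp \<and> snd p \<in> Lm \<and> A = fst p + snd p"
      then have "fst p = xi" using unique_decomp[of "fst p" xi "snd p" eta] d by simp
      moreover have "snd p = eta" using p d calculation by simp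
      ultimately show "p = (xi, eta)" by (simp add: prod_eq_iff)
    qed
  qed
  show ?thesis unfolding Let_def by (intro conjI h1 h2 h3)
qed

end

theorem mainTheorem2:
  fixes scale :: "complex \<Rightarrow> 'g::ab_group_add \<Rightarrow> 'g"
    and br :: "'g \<Rightarrow> 'g \<Rightarrow> 'g"
    and tau sig1 sig2 :: "'g \<Rightarrow> 'g"
    and s1 s2 :: "'g set"
  assumes g: "complex_simple_lie_algebra scale br"
    and tau: "conj_linear_involution scale br tau"
    and sig1: "linear_involution scale br sig1"
    and sig2: "linear_involution scale br sig2"
    and comm12: "\<forall>x. sig1 (sig2 x) = sig2 (sig1 x)"
    and comm1t: "\<forall>x. sig1 (tau x) = tau (sig1 x)"
    and comm2t: "\<forall>x. sig2 (tau x) = tau (sig2 x)"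
    and s1_ideal: "real_lie_ideal_of scale br s1 (fixset tau \<inter> fixset sig1 \<inter> fixset sig2)"
    and s2_ideal: "real_lie_ideal_of scale br s2 (fixset tau \<inter> fixset sig1 \<inter> fixset sig2)"
    and k12_sum: "fixset tau \<inter> fixset sig1 \<inter> fixset sig2 = set_sum s1 s2"
    and k12_direct: "s1 \<inter> s2 = {0}"
    and k1'_sub: "real_lie_subalgebra scale br
                    (set_sum s2 (fixset tau \<inter> fixset sig1 \<inter> negset sig2))"
    and k2'_sub: "real_lie_subalgebra scale br
                    (set_sum s1 (fixset tau \<inter> fixset sig2 \<inter> negset sig1))"
    and k1_sum: "fixset tau \<inter> fixset sig1 =
                   set_sum s1 (set_sum s2 (fixset tau \<inter> fixset sig1 \<inter> negset sig2))"
    and k1_direct: "s1 \<inter> set_sum s2 (fixset tau \<inter> fixset sig1 \<inter> negset sig2) = {0}"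
    and k1_comm: "\<forall>a\<in>s1. \<forall>b\<in>set_sum s2 (fixset tau \<inter> fixset sig1 \<inter> negset sig2). br a b = 0"
    and k2_sum: "fixset tau \<inter> fixset sig2 =
                   set_sum (set_sum s1 (fixset tau \<inter> fixset sig2 \<inter> negset sig1)) s2"
    and k2_direct: "set_sum s1 (fixset tau \<inter> fixset sig2 \<inter> negset sig1) \<inter> s2 = {0}"
    and k2_comm: "\<forall>a\<in>set_sum s1 (fixset tau \<inter> fixset sig2 \<inter> negset sig1). \<forall>b\<in>s2. br a b = 0"
  shows
    "let L = twisted_laurent (fixset tau \<inter> fixset sig1) (fixset tau \<inter> negset sig1);
         k1' = set_sum s2 (fixset tau \<inter> fixset sig1 \<inter> negset sig2);
         k2' = set_sum s1 (fixset tau \<inter> fixset sig2 \<inter> negset sig1);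
         Lplus = {xi \<in> L. (\<forall>j. xi (- j) = sig2 (xi j)) \<and> eval_one xi \<in> k2'};
         Lminus = {xi \<in> L. (\<forall>j>0. xi j = 0) \<and> xi 0 \<in> k1'}
     in laurent_subalgebra scale br L Lplus \<and> laurent_subalgebra scale br L Lminus \<and>
        (\<forall>A\<in>L. \<exists>!p. fst p \<in> Lplus \<and> snd p \<in> Lminus \<and> A = fst p + snd p)"
proof -
  have la: "lie_algebra scale br" using g unfolding complex_simple_lie_algebra_def by blast
  have vs: "vector_space scale" using la unfolding lie_algebra_def by blast
  have md: "module scale" using vs unfolding module_def vector_space_def by blast
  interpret LS scale br tau sig1 sig2 s1 s2
  proof (rule LS.intro[OF md], unfold_locales)
    show "br (x + y) z = br x z + br y z" "br x (y + z) = br x y + br x z" for x y z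
      using la unfolding lie_algebra_def by blast+
    show "tau (x + y) = tau x + tau y" "tau (scale c x) = scale (cnj c) (tau x)"
      "tau (br x y) = br (tau x) (tau y)" for x y c
      using tau unfolding conj_linear_involution_def by blast+
    show "sig1 (x + y) = sig1 x + sig1 y" "sig1 (scale c x) = scale c (sig1 x)"
      "sig1 (br x y) = br (sig1 x) (sig1 y)" for x y c
      using sig1 unfolding linear_involution_def by blast+
    show "sig2 (x + y) = sig2 x + sig2 y" "sig2 (scale c x) = scale c (sig2 x)"
      "sig2 (br x y) = br (sig2 x) (sig2 y)" "sig2 (sig2 x) = x" for x y c
      using sig2 unfolding linear_involution_def by blast+
    show "sig1 (sig2 x) = sig2 (sig1 x)" "sig2 (tau x) = tau (sig2 x)" for x
      using comm12 comm2t by blast+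
    show "real_subspace scale s1" "s1 \<subseteq> fixset tau \<inter> fixset sig1 \<inter> fixset sig2"
      using s1_ideal unfolding real_lie_ideal_of_def by blast+
    show "real_subspace scale s2" "s2 \<subseteq> fixset tau \<inter> fixset sig1 \<inter> fixset sig2"
      using s2_ideal unfolding real_lie_ideal_of_def by blast+
  qed (fact k12_sum k1'_sub k2'_sub k1_sum k1_direct k2_sum k2_direct)+
  show ?thesis by (rule main)
qed

end
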